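(* Let $H$ be a Hamiltonian cycle of the complete graph $K_n$ on $V=\{1,\dots,n\}$ and let $\delta\in(0,1]$. Then, with probability $1-e^{-\omega(n^{\min\{\delta,1/4\}/2})}$ (as $n\to\infty$), the output of one application of the edge-based random solution generation with the matrix $\Pi^H$ is a $k$-exchange of $H$ for some $k<n^{\delta}$.
   Context: For a Hamiltonian cycle $H$, $\Pi^H=(\pi_{i,j})$ is the symmetric $n\times n$ matrix with $\pi_{i,i}=0$, $\pi_{i,j}=1-\frac1n$ if $\{i,j\}\in H$ and $\pi_{i,j}=\frac{1}{n(n-2)}$ otherwise. Edge-based generation from $\Pi$: start with $B=\emptyset$ and repeatedly add to $B$ an edge $\{i,j\}\notin B$ chosen among the admissible edges with probability proportional to $\pi_{i,j}+\pi_{j,i}$, until $B$ is a Hamiltonian cycle; an edge is admissible if adding it to $B$ creates no vertex of degree $\ge3$ and no cycle with fewer than $n$ edges. A $k$-exchange of $H$ is a Hamiltonian cycle obtained from $H$ by removing $k$ of its edges and adding $k$ edges not in $H$ (for $k=0$ this is $H$ itself). *)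

theory Defs
  imports "HOL-Probability.Probability"
begin

definition Kn_edges :: "nat \<Rightarrow> nat set set" where
  "Kn_edges n = {{i, j} | i j. i \<in> {1..n} \<and> j \<in> {1..n} \<and> i \<noteq> j}"

definition cycle_edges :: "nat list \<Rightarrow> nat set set" where
  "cycle_edges vs = {{vs ! i, vs ! ((i + 1) mod length vs)} | i. i < length vs}"

definition is_cycle :: "nat set set \<Rightarrow> bool" where
  "is_cycle C \<longleftrightarrow> (\<exists>vs. length vs \<ge> 3 \<and> distinct vs \<and> C = cycle_edges vs)"

definition ham_cycle :: "nat \<Rightarrow> nat set set \<Rightarrow> bool" where
  "ham_cycle n C \<longleftrightarrow> (\<exists>vs. length vs \<ge> 3 \<and> distinct vs \<and> set vs = {1..n} \<and> C = cycle_edges vs)"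

definition pi_H :: "nat \<Rightarrow> nat set set \<Rightarrow> nat \<Rightarrow> nat \<Rightarrow> real" where
  "pi_H n H i j = (if i = j then 0
                   else if {i, j} \<in> H then 1 - 1 / real n
                   else 1 / (real n * (real n - 2)))"

definition degree :: "nat set set \<Rightarrow> nat \<Rightarrow> nat" where
  "degree B v = card {e \<in> B. v \<in> e}"

definition admissible :: "nat \<Rightarrow> nat set set \<Rightarrow> nat set \<Rightarrow> bool" where
  "admissible n B e \<longleftrightarrow> e \<in> Kn_edges n \<and> e \<notin> B \<and>
     (\<forall>v. degree (insert e B) v \<le> 2) \<and>
     \<not> (\<exists>C \<subseteq> insert e B. is_cycle C \<and> card C < n)"

definition edge_weight :: "(nat \<Rightarrow> nat \<Rightarrow> real) \<Rightarrow> nat set \<Rightarrow> real" where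
  "edge_weight P e = P (Min e) (Max e) + P (Max e) (Min e)"

definition weighted_choice :: "'a set \<Rightarrow> ('a \<Rightarrow> real) \<Rightarrow> 'a pmf" where
  "weighted_choice A w = embed_pmf (\<lambda>x. if x \<in> A then w x / (\<Sum>y\<in>A. w y) else 0)"

text \<open>Edge-based generation, run with a fuel bound (each step adds one edge, so n steps suffice).\<close>
fun gen_steps :: "(nat \<Rightarrow> nat \<Rightarrow> real) \<Rightarrow> nat \<Rightarrow> nat \<Rightarrow> nat set set \<Rightarrow> nat set set pmf" where
  "gen_steps P n 0 B = return_pmf B"
| "gen_steps P n (Suc m) B =
     (if ham_cycle n B then return_pmf B
      else bind_pmf (weighted_choice {e. admissible n B e} (edge_weight P))
             (\<lambda>e. gen_steps P n m (insert e B)))"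

definition edge_gen :: "nat \<Rightarrow> (nat \<Rightarrow> nat \<Rightarrow> real) \<Rightarrow> nat set set pmf" where
  "edge_gen n P = gen_steps P n n {}"

definition k_exchange :: "nat \<Rightarrow> nat set set \<Rightarrow> nat set set \<Rightarrow> nat \<Rightarrow> bool" where
  "k_exchange n H H' k \<longleftrightarrow> ham_cycle n H' \<and> card (H - H') = k \<and> card (H' - H) = k"

end

theory Submission
  imports Defs
begin


fun pedges :: "nat list \<Rightarrow> nat set set" where
  "pedges (x # y # xs) = insert {x, y} (pedges (y # xs))"
| "pedges _ = {}"

lemma pedges_nth: "pedges p = {{p ! i, p ! Suc i} | i. Suc i < length p}"
proof (induction p rule: pedges.induct)
  case (1 x y xs)
  have "{{(x#y#xs) ! i, (x#y#xs) ! Suc i} | i. Suc i < length (x#y#xs)}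
     = insert {x,y} {{(y#xs) ! i, (y#xs) ! Suc i} | i. Suc i < length (y#xs)}"
  proof (rule set_eqI, rule iffI)
    fix e assume "e \<in> {{(x#y#xs) ! i, (x#y#xs) ! Suc i} | i. Suc i < length (x#y#xs)}"
    then obtain i where i: "Suc i < length (x#y#xs)" "e = {(x#y#xs) ! i, (x#y#xs) ! Suc i}" by blast
    show "e \<in> insert {x,y} {{(y#xs) ! i, (y#xs) ! Suc i} | i. Suc i < length (y#xs)}"
    proof (cases i)
      case 0 then show ?thesis using i by simp
    next
      case (Suc k) then show ?thesis using i by auto
    qed
  next
    fix e assume "e \<in> insert {x,y} {{(y#xs) ! i, (y#xs) ! Suc i} | i. Suc i < length (y#xs)}"
    then show "e \<in> {{(x#y#xs) ! i, (x#y#xs) ! Suc i} | i. Suc i < length (x#y#xs)}"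
    proof
      assume "e = {x,y}" then show ?thesis by (intro CollectI exI[of _ 0]) auto
    next
      assume "e \<in> {{(y#xs) ! i, (y#xs) ! Suc i} | i. Suc i < length (y#xs)}"
      then obtain i where "Suc i < length (y#xs)" "e = {(y#xs) ! i, (y#xs) ! Suc i}" by blast
      then show ?thesis by (intro CollectI exI[of _ "Suc i"]) auto
    qed
  qed
  then show ?case using 1 by simp
qed auto

lemma pedges_finite[simp]: "finite (pedges p)"
  by (induction p rule: pedges.induct) auto

lemma pedges_append: "a \<noteq> [] \<Longrightarrow> b \<noteq> [] \<Longrightarrow>
   pedges (a @ b) = insert {last a, hd b} (pedges a \<union> pedges b)"
proof (induction a rule: pedges.induct)
  case (1 x y xs) then show ?case by auto
next
  case ("2_2" x) then show ?case by (cases b) auto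
qed auto

lemma pedges_rev: "pedges (rev p) = pedges p"
proof (induction p rule: pedges.induct)
  case (1 x y xs)
  have "rev (x # y # xs) = rev (y#xs) @ [x]" by simp
  then have "pedges (rev (x # y # xs)) = insert {last (rev (y#xs)), x} (pedges (rev (y#xs)))"
    using pedges_append[of "rev (y#xs)" "[x]"] by simp
  then show ?case using 1 by (auto simp: insert_commute)
qed auto

lemma pedges_sub: "e \<in> pedges p \<Longrightarrow> e \<subseteq> set p"
  by (induction p rule: pedges.induct) auto

lemma pedges_two: "e \<in> pedges p \<Longrightarrow> distinct p \<Longrightarrow> \<exists>a b. a \<noteq> b \<and> e = {a,b}"
  by (induction p rule: pedges.induct) auto

lemma pedges_at:
  assumes "distinct p" "i < length p" "e \<in> pedges p" "p ! i \<in> e"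
  shows "(0 < i \<and> e = {p ! (i - 1), p ! i}) \<or> (Suc i < length p \<and> e = {p ! i, p ! Suc i})"
proof -
  obtain a where a: "Suc a < length p" "e = {p ! a, p ! Suc a}" using assms(3) unfolding pedges_nth by auto
  show ?thesis
  proof (cases "p ! i = p ! a")
    case True
    then have "i = a" using assms(1,2) a(1) by (simp add: nth_eq_iff_index_eq)
    then show ?thesis using a by auto
  next
    case False
    then have "p ! i = p ! Suc a" using a assms(4) by auto
    then have "i = Suc a" using assms(1,2) a(1) by (simp add: nth_eq_iff_index_eq)
    then show ?thesis using a by auto
  qed
qed

lemma pedges_in: "Suc i < length p \<Longrightarrow> {p ! i, p ! Suc i} \<in> pedges p"
  unfolding pedges_nth by auto



lemma cycle_edges_alt: "cycle_edges vs = (\<lambda>i. {vs ! i, vs ! (Suc i mod length vs)}) ` {..<length vs}"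
  unfolding cycle_edges_def by auto

lemma cycle_edges_finite[simp]: "finite (cycle_edges vs)"
  unfolding cycle_edges_alt by simp

lemma cycle_edges_sub: "e \<in> cycle_edges vs \<Longrightarrow> e \<subseteq> set vs"
proof -
  assume "e \<in> cycle_edges vs"
  then obtain i where i: "i < length vs" "e = {vs ! i, vs ! (Suc i mod length vs)}" unfolding cycle_edges_def by auto
  have "Suc i mod length vs < length vs" using i(1) by (intro mod_less_divisor) (cases vs; simp)
  then show ?thesis using i by auto
qed

lemma mod_prev_next:
  fixes L i :: nat assumes "3 \<le> L" "i < L"
  shows "Suc ((i + L - 1) mod L) mod L = i"
    "(i + L - 1) mod L < L" "Suc i mod L < L"
    "(i + L - 1) mod L \<noteq> Suc i mod L"
    "(i + L - 1) mod L \<noteq> i" "Suc i mod L \<noteq> i"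
proof -
  show "(i + L - 1) mod L < L" "Suc i mod L < L" using assms by auto
  show "Suc ((i + L - 1) mod L) mod L = i"
  proof (cases i)
    case 0 then show ?thesis using assms by simp
  next
    case (Suc k)
    then have "(i + L - 1) mod L = k" using assms by (simp add: Suc_lessD)
    then show ?thesis using Suc assms by simp
  qed
  show "(i + L - 1) mod L \<noteq> Suc i mod L"
  proof (cases i)
    case 0 then show ?thesis using assms by (simp add: mod_Suc)
  next
    case (Suc k)
    then have a: "(i + L - 1) mod L = k" using assms by (simp add: Suc_lessD)
    show ?thesis
    proof (cases "Suc i < L")
      case True then show ?thesis using a Suc by simp
    next
      case False then have "Suc i = L" using assms by simp
      then show ?thesis using a Suc assms by simp
    qed
  qed
  show "(i + L - 1) mod L \<noteq> i"
  proof (cases i)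
    case 0 then show ?thesis using assms by simp
  next
    case (Suc k)
    then have "(i + L - 1) mod L = k" using assms by (simp add: Suc_lessD)
    then show ?thesis using Suc by simp
  qed
  show "Suc i mod L \<noteq> i"
  proof (cases "Suc i < L")
    case True then show ?thesis by simp
  next
    case False then have "Suc i = L" using assms by simp
    then show ?thesis using assms by simp
  qed
qed

lemma ce_at:
  assumes d: "distinct vs" and L: "3 \<le> length vs" and i: "i < length vs"
  defines "pv \<equiv> (i + length vs - 1) mod length vs"
  defines "nx \<equiv> Suc i mod length vs"
  shows "{e \<in> cycle_edges vs. vs ! i \<in> e} = {{vs ! pv, vs ! i}, {vs ! i, vs ! nx}}"
    "{vs ! pv, vs ! i} \<noteq> {vs ! i, vs ! nx}"
proof -
  note m = mod_prev_next[OF L i, folded pv_def nx_def]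
  have neq: "vs ! pv \<noteq> vs ! nx" "vs ! pv \<noteq> vs ! i" "vs ! nx \<noteq> vs ! i"
    using m d i by (simp_all add: nth_eq_iff_index_eq)
  show "{vs ! pv, vs ! i} \<noteq> {vs ! i, vs ! nx}" using neq by (auto simp: doubleton_eq_iff)
  show "{e \<in> cycle_edges vs. vs ! i \<in> e} = {{vs ! pv, vs ! i}, {vs ! i, vs ! nx}}"
  proof (rule set_eqI, rule iffI)
    fix e assume "e \<in> {e \<in> cycle_edges vs. vs ! i \<in> e}"
    then obtain a where a: "a < length vs" "e = {vs ! a, vs ! (Suc a mod length vs)}" "vs ! i \<in> e"
      unfolding cycle_edges_def by auto
    have sa: "Suc a mod length vs < length vs" using a(1) by (intro mod_less_divisor) (cases vs; simp)
    show "e \<in> {{vs ! pv, vs ! i}, {vs ! i, vs ! nx}}"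
    proof (cases "vs ! i = vs ! a")
      case True then have "i = a" using d i a(1) by (simp add: nth_eq_iff_index_eq)
      then show ?thesis using a nx_def by auto
    next
      case False then have "vs ! i = vs ! (Suc a mod length vs)" using a by auto
      then have ia: "i = Suc a mod length vs" using d i sa by (simp add: nth_eq_iff_index_eq)
      have "pv = a"
      proof (cases "Suc a < length vs")
        case True then have "i = Suc a" using ia by simp
        then show ?thesis unfolding pv_def using a(1) by simp
      next
        case False then have "Suc a = length vs" using a(1) by simp
        then show ?thesis unfolding pv_def using ia by simp
      qed
      then show ?thesis using a ia by auto
    qed
  next
    fix e assume e: "e \<in> {{vs ! pv, vs ! i}, {vs ! i, vs ! nx}}"
    have "{vs ! i, vs ! nx} \<in> cycle_edges vs" using i unfolding cycle_edges_def nx_def by auto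
    moreover have "{vs ! pv, vs ! i} \<in> cycle_edges vs"
      using m(1,2) unfolding cycle_edges_def by (intro CollectI exI[of _ pv]) auto
    ultimately show "e \<in> {e \<in> cycle_edges vs. vs ! i \<in> e}" using e by auto
  qed
qed

lemma card_cycle_edges:
  assumes d: "distinct vs" and L: "3 \<le> length vs"
  shows "card (cycle_edges vs) = length vs"
proof -
  let ?L = "length vs"
  have "inj_on (\<lambda>i. {vs ! i, vs ! (Suc i mod ?L)}) {..<?L}"
  proof (rule inj_onI)
    fix a b assume a: "a \<in> {..<?L}" and b: "b \<in> {..<?L}"
      and eq: "{vs ! a, vs ! (Suc a mod ?L)} = {vs ! b, vs ! (Suc b mod ?L)}"
    have sa: "Suc a mod ?L < ?L" "Suc b mod ?L < ?L" using a b by (auto intro!: mod_less_divisor)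
    from eq have "(vs ! a = vs ! b \<and> vs ! (Suc a mod ?L) = vs ! (Suc b mod ?L)) \<or>
       (vs ! a = vs ! (Suc b mod ?L) \<and> vs ! (Suc a mod ?L) = vs ! b)" by (auto simp: doubleton_eq_iff)
    then show "a = b"
    proof
      assume "vs ! a = vs ! b \<and> vs ! (Suc a mod ?L) = vs ! (Suc b mod ?L)"
      then show ?thesis using a b d by (simp add: nth_eq_iff_index_eq)
    next
      assume h: "vs ! a = vs ! (Suc b mod ?L) \<and> vs ! (Suc a mod ?L) = vs ! b"
      have x1: "a = Suc b mod ?L" using nth_eq_iff_index_eq[OF d, of a "Suc b mod ?L"] h a sa by simp
      have x2: "Suc a mod ?L = b" using nth_eq_iff_index_eq[OF d, of "Suc a mod ?L" b] h b sa by simp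
      note x = x1 x2
      show ?thesis
      proof (cases "Suc a < ?L")
        case True
        then have "b = Suc a" using x by simp
        show ?thesis
        proof (cases "Suc b < ?L")
          case True then have "a = Suc b" using x1 by simp
          then show ?thesis using \<open>b = Suc a\<close> by linarith
        next
          case False then have sb: "Suc b = ?L" using b by simp
          have "a = 0" using x1 sb by simp
          then have "Suc b = 2" using \<open>b = Suc a\<close> by simp
          then show ?thesis using sb L by simp
        qed
      next
        case False then have "Suc a = ?L" using a by simp
        then have "b = 0" using x by simp
        then show ?thesis using x L \<open>Suc a = ?L\<close> by simp
      qed
    qed
  qed
  then show ?thesis unfolding cycle_edges_alt by (simp add: card_image)
qed

lemma degree_cycle_le2:
  assumes d: "distinct vs" and L: "3 \<le> length vs"
  shows "degree (cycle_edges vs) x \<le> 2"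
proof (cases "x \<in> set vs")
  case True
  then obtain i where i: "i < length vs" "x = vs ! i" by (auto simp: in_set_conv_nth)
  show ?thesis unfolding degree_def using ce_at(1)[OF d L i(1)] i(2)
    by (simp add: card_insert_le_m1)
next
  case False
  then have h0: "{e \<in> cycle_edges vs. x \<in> e} = {}" using cycle_edges_sub by blast
  show ?thesis unfolding degree_def h0 by simp
qed

lemma cycle_in_ham:
  assumes C: "is_cycle C" "C \<subseteq> cycle_edges h" and dh: "distinct h" and Lh: "3 \<le> length h"
  shows "length h \<le> card C" "set h \<subseteq> \<Union>C"
proof -
  obtain vs where vs: "3 \<le> length vs" "distinct vs" "C = cycle_edges vs" using C(1) unfolding is_cycle_def by auto
  let ?L = "length h"
  have step: "h ! (Suc i mod ?L) \<in> set vs" if xi: "i < ?L" "h ! i \<in> set vs" for i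
  proof -
    obtain a where a: "a < length vs" "h ! i = vs ! a" using xi(2) by (auto simp: in_set_conv_nth)
    note ca = ce_at[OF vs(2) vs(1) a(1)]
    note ch = ce_at[OF dh Lh xi(1)]
    have sub: "{e \<in> C. h ! i \<in> e} \<subseteq> {e \<in> cycle_edges h. h ! i \<in> e}" using C(2) by auto
    have "{e \<in> C. h ! i \<in> e} = {e \<in> C. h ! i \<in> e}" ..
    have c2: "card {e \<in> C. h ! i \<in> e} = 2" using ca a(2) vs(3) by simp
    have c2': "card {e \<in> cycle_edges h. h ! i \<in> e} = 2" using ch by simp
    have "{e \<in> C. h ! i \<in> e} = {e \<in> cycle_edges h. h ! i \<in> e}"
      using sub c2 c2' by (intro card_subset_eq) (auto simp: ch)
    then have "{h ! i, h ! (Suc i mod ?L)} \<in> C" using ch by auto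
    then show ?thesis using cycle_edges_sub vs(3) by blast
  qed
  obtain e where e: "e \<in> C" using vs unfolding cycle_edges_def by (cases vs) auto
  obtain x where x: "x \<in> e" using pedges_two e C vs by (auto simp: cycle_edges_def)
  have xh: "x \<in> set h" using x e C(2) cycle_edges_sub by blast
  have xv: "x \<in> set vs" using x e vs(3) cycle_edges_sub by blast
  obtain i0 where i0: "i0 < ?L" "h ! i0 = x" using xh by (auto simp: in_set_conv_nth)
  have all: "h ! ((i0 + m) mod ?L) \<in> set vs" for m
  proof (induction m)
    case 0 then show ?case using i0 xv by simp
  next
    case (Suc m)
    have "(i0 + m) mod ?L < ?L" using i0 by (intro mod_less_divisor) auto
    from step[OF this Suc] show ?case by (simp add: mod_Suc_eq)
  qed
  have hs: "set h \<subseteq> set vs"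
  proof
    fix y assume "y \<in> set h"
    then obtain k where k: "k < ?L" "y = h ! k" by (auto simp: in_set_conv_nth)
    have "(i0 + (k + ?L - i0)) mod ?L = k" using k i0 by simp
    then show "y \<in> set vs" using all[of "k + ?L - i0"] k by simp
  qed
  have "\<Union>C = set vs"
  proof
    show "\<Union>C \<subseteq> set vs" using vs(3) cycle_edges_sub by blast
  next
    show "set vs \<subseteq> \<Union>C"
    proof
      fix y assume "y \<in> set vs"
      then obtain a where "a < length vs" "y = vs ! a" by (auto simp: in_set_conv_nth)
      then show "y \<in> \<Union>C" using ce_at(1)[OF vs(2) vs(1)] vs(3) by blast
    qed
  qed
  then show "set h \<subseteq> \<Union>C" using hs by simp
  have "length h = card (set h)" using dh by (simp add: distinct_card)
  also have "\<dots> \<le> card (set vs)" using hs by (simp add: card_mono)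
  also have "\<dots> = card C" using vs card_cycle_edges by (simp add: distinct_card)
  finally show "length h \<le> card C" .
qed

lemma cycle_pedges:
  assumes "2 \<le> length p"
  shows "cycle_edges p = insert {last p, hd p} (pedges p)"
proof -
  let ?L = "length p"
  have "Suc (?L - 1) = ?L" using assms by simp
  then have m0: "Suc (?L - 1) mod ?L = 0" by simp
  have "cycle_edges p = (\<lambda>i. {p ! i, p ! (Suc i mod ?L)}) ` ({..<?L - 1} \<union> {?L - 1})"
    unfolding cycle_edges_alt using assms by (intro arg_cong[where f="image _"]) auto
  also have "\<dots> = insert {p ! (?L - 1), p ! 0} ((\<lambda>i. {p ! i, p ! Suc i}) ` {..<?L - 1})"
    using assms m0 by (auto intro!: image_cong)
  also have "(\<lambda>i. {p ! i, p ! Suc i}) ` {..<?L - 1} = pedges p"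
    unfolding pedges_nth by auto
  moreover have "p \<noteq> []" using assms by auto
  ultimately show ?thesis by (simp add: last_conv_nth hd_conv_nth)
qed



definition psys :: "nat \<Rightarrow> nat list set \<Rightarrow> bool" where
  "psys n P \<longleftrightarrow> finite P \<and> (\<forall>p\<in>P. p \<noteq> [] \<and> distinct p) \<and>
     (\<forall>p\<in>P. \<forall>q\<in>P. p \<noteq> q \<longrightarrow> set p \<inter> set q = {}) \<and> \<Union>(set ` P) = {1..n}"

definition Bof :: "nat list set \<Rightarrow> nat set set" where
  "Bof P = \<Union>(pedges ` P)"

lemma psysD:
  assumes "psys n P"
  shows "finite P" "\<And>p. p \<in> P \<Longrightarrow> p \<noteq> []" "\<And>p. p \<in> P \<Longrightarrow> distinct p"
    "\<And>p q x. p \<in> P \<Longrightarrow> q \<in> P \<Longrightarrow> x \<in> set p \<Longrightarrow> x \<in> set q \<Longrightarrow> p = q"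
    "\<Union>(set ` P) = {1..n}"
  using assms unfolding psys_def by blast+

lemma Bof_finite: "finite P \<Longrightarrow> finite (Bof P)"
  unfolding Bof_def by simp

lemma edges_at:
  assumes "psys n P" "p \<in> P" "x \<in> set p"
  shows "{e \<in> Bof P. x \<in> e} = {e \<in> pedges p. x \<in> e}"
proof -
  have "q = p" if "q \<in> P" "e \<in> pedges q" "x \<in> e" for q e
    using psysD(4)[OF assms(1) that(1) assms(2) _ assms(3)] pedges_sub[OF that(2)] that(3) by blast
  then show ?thesis using assms(2) unfolding Bof_def by blast
qed

lemma degree_Bof_le2:
  assumes "psys n P"
  shows "degree (Bof P) x \<le> 2"
proof (cases "\<exists>p\<in>P. x \<in> set p")
  case True
  then obtain p where p: "p \<in> P" "x \<in> set p" by blast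
  then obtain i where i: "i < length p" "x = p ! i" by (auto simp: in_set_conv_nth)
  have "{e \<in> pedges p. x \<in> e} \<subseteq> {{p ! (i - 1), p ! i}, {p ! i, p ! Suc i}}"
    using pedges_at[OF psysD(3)[OF assms p(1)] i(1)] i(2) by blast
  then have "card {e \<in> pedges p. x \<in> e} \<le> card {{p ! (i - 1), p ! i}, {p ! i, p ! Suc i}}"
    by (intro card_mono) auto
  also have "\<dots> \<le> 2" by (simp add: card_insert_le_m1)
  finally show ?thesis unfolding degree_def edges_at[OF assms p] .
next
  case False
  then have h0: "{e \<in> Bof P. x \<in> e} = {}" unfolding Bof_def using pedges_sub by blast
  show ?thesis unfolding degree_def h0 by simp
qed

lemma degree_Bof_ends:
  assumes "psys n P" "p \<in> P" "x \<in> set p" "degree (Bof P) x \<le> 1"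
  shows "x = hd p \<or> x = last p"
proof (rule ccontr)
  assume nx: "\<not> (x = hd p \<or> x = last p)"
  obtain i where i: "i < length p" "x = p ! i" using assms(3) by (auto simp: in_set_conv_nth)
  have dp: "distinct p" using psysD(3)[OF assms(1,2)] .
  have ne: "p \<noteq> []" using i by auto
  have i0: "0 < i" using nx i ne by (cases i) (auto simp: hd_conv_nth)
  have i1: "Suc i < length p"
  proof (rule ccontr)
    assume "\<not> Suc i < length p" then have "i = length p - 1" using i by simp
    then show False using nx i ne by (simp add: last_conv_nth)
  qed
  have e1: "{p ! (i - 1), p ! i} \<in> pedges p" using pedges_in[of "i - 1" p] i0 i(1) by simp
  have e2: "{p ! i, p ! Suc i} \<in> pedges p" using pedges_in[OF i1] .
  have "p ! (i - 1) \<noteq> p ! Suc i" using dp i1 by (simp add: nth_eq_iff_index_eq)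
  moreover have "p ! (i - 1) \<noteq> p ! i" using dp i i0 by (simp add: nth_eq_iff_index_eq)
  ultimately have neq: "{p ! (i - 1), p ! i} \<noteq> {p ! i, p ! Suc i}" by (auto simp: doubleton_eq_iff)
  have "{{p ! (i - 1), p ! i}, {p ! i, p ! Suc i}} \<subseteq> {e \<in> pedges p. x \<in> e}" using e1 e2 i by auto
  then have "card {{p ! (i - 1), p ! i}, {p ! i, p ! Suc i}} \<le> card {e \<in> pedges p. x \<in> e}"
    by (intro card_mono) auto
  then have "2 \<le> degree (Bof P) x" unfolding degree_def edges_at[OF assms(1-3)] using neq by simp
  then show False using assms(4) by simp
qed

lemma psys_acyclic:
  assumes ps: "psys n P" and C: "C \<subseteq> Bof P" "is_cycle C"
  shows False
proof -
  obtain vs where vs: "3 \<le> length vs" "distinct vs" "C = cycle_edges vs" using C(2) unfolding is_cycle_def by auto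
  let ?L = "length vs"
  have "{vs ! 0, vs ! (Suc 0 mod ?L)} \<in> cycle_edges vs" unfolding cycle_edges_alt using vs by auto
  then have e0: "{vs ! 0, vs ! (Suc 0 mod ?L)} \<in> C" using vs by simp
  then obtain p where p: "p \<in> P" "{vs ! 0, vs ! (Suc 0 mod ?L)} \<in> pedges p" using C(1) unfolding Bof_def by blast
  have x0: "vs ! 0 \<in> set p" using pedges_sub[OF p(2)] by blast
  have step: "vs ! (Suc a mod ?L) \<in> set p" if "a < ?L" "vs ! a \<in> set p" for a
  proof -
    have "{vs ! a, vs ! (Suc a mod ?L)} \<in> cycle_edges vs" unfolding cycle_edges_alt using that(1) by blast
    then have "{vs ! a, vs ! (Suc a mod ?L)} \<in> C" using vs(3) by simp
    then obtain q where q: "q \<in> P" "{vs ! a, vs ! (Suc a mod ?L)} \<in> pedges q" using C(1) unfolding Bof_def by blast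
    have "q = p" using psysD(4)[OF ps q(1) p(1) _ that(2)] pedges_sub[OF q(2)] by blast
    then show ?thesis using pedges_sub[OF q(2)] by blast
  qed
  have all: "vs ! (m mod ?L) \<in> set p" for m
  proof (induction m)
    case 0 then show ?case using x0 by simp
  next
    case (Suc m)
    have "m mod ?L < ?L" using vs by (intro mod_less_divisor) auto
    from step[OF this Suc] show ?case by (simp add: mod_Suc_eq)
  qed
  have vsp: "set vs \<subseteq> set p"
  proof
    fix y assume "y \<in> set vs"
    then obtain k where "k < ?L" "y = vs ! k" by (auto simp: in_set_conv_nth)
    then show "y \<in> set p" using all[of k] by simp
  qed
  have dp: "distinct p" using psysD(3)[OF ps p(1)] .
  define m where "m = (LEAST k. k < length p \<and> p ! k \<in> set vs)"
  have ex: "\<exists>k. k < length p \<and> p ! k \<in> set vs"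
  proof -
    obtain k where k: "k < length p" "p ! k = vs ! 0" using x0 by (auto simp: in_set_conv_nth)
    have "vs ! 0 \<in> set vs" using vs(1) by (intro nth_mem) (cases vs; auto)
    then show ?thesis using k by auto
  qed
  have m: "m < length p" "p ! m \<in> set vs" using LeastI_ex[OF ex] unfolding m_def by auto
  have mmin: "p ! k \<notin> set vs" if "k < m" for k
    using not_less_Least[OF that[unfolded m_def]] m(1) that by auto
  obtain a where a: "a < ?L" "vs ! a = p ! m" using m(2) by (auto simp: in_set_conv_nth)
  note ca = ce_at[OF vs(2) vs(1) a(1)]
  have "{e \<in> C. p ! m \<in> e} \<subseteq> {{p ! m, p ! Suc m}}"
  proof
    fix e assume e: "e \<in> {e \<in> C. p ! m \<in> e}"
    then have eB: "e \<in> {e \<in> Bof P. p ! m \<in> e}" using C(1) by auto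
    have pm: "p ! m \<in> set p" using m(1) by simp
    have ep: "e \<in> pedges p" using eB unfolding edges_at[OF ps p(1) pm] by auto
    have esub: "e \<subseteq> set vs" using e vs(3) cycle_edges_sub by blast
    have pme: "p ! m \<in> e" using e by simp
    from pedges_at[OF dp m(1) ep pme] show "e \<in> {{p ! m, p ! Suc m}}"
    proof
      assume h: "0 < m \<and> e = {p ! (m - 1), p ! m}"
      then have "p ! (m - 1) \<in> set vs" using esub by auto
      then show ?thesis using mmin[of "m - 1"] h by simp
    qed simp
  qed
  then have "card {e \<in> C. p ! m \<in> e} \<le> card {{p ! m, p ! Suc m}}" by (intro card_mono) auto
  then have "card {e \<in> C. p ! m \<in> e} \<le> 1" by simp
  then show False using ca a(2) vs(3) by simp
qed



lemma merge:
  assumes ps: "psys n P" and pq: "p \<in> P" "q \<in> P" "p \<noteq> q"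
    and u: "u = hd p \<or> u = last p" and v: "v = hd q \<or> v = last q"
  defines "p' \<equiv> (if last p = u then p else rev p)"
  defines "q' \<equiv> (if hd q = v then q else rev q)"
  defines "P' \<equiv> insert (p' @ q') (P - {p, q})"
  shows "psys n P'" "Bof P' = insert {u, v} (Bof P)" "{u, v} \<notin> Bof P" "card P' + 1 = card P" "u \<noteq> v"
    "u \<in> {1..n}" "v \<in> {1..n}"
proof -
  have fin: "finite P" and pne: "p \<noteq> []" "q \<noteq> []" and dpq: "distinct p" "distinct q"
    using psysD[OF ps] pq by auto
  have disj: "set p \<inter> set q = {}" using psysD(4)[OF ps pq(1,2)] pq(3) by blast
  have lp: "last p' = u" using u pne unfolding p'_def by (auto simp: last_rev)
  have hq: "hd q' = v" using v pne unfolding q'_def by (auto simp: hd_rev)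
  have sp: "set p' = set p" "set q' = set q" unfolding p'_def q'_def by auto
  have ep: "pedges p' = pedges p" "pedges q' = pedges q" unfolding p'_def q'_def by (auto simp: pedges_rev)
  have ne: "p' \<noteq> []" "q' \<noteq> []" using pne unfolding p'_def q'_def by auto
  have dd: "distinct p'" "distinct q'" using dpq unfolding p'_def q'_def by auto
  have uin: "u \<in> set p" "v \<in> set q" using u v pne by auto
  show "u \<noteq> v" using uin disj by auto
  have un: "\<Union>(set ` P) = {1..n}" using psysD(5)[OF ps] .
  show "u \<in> {1..n}" "v \<in> {1..n}" using uin pq un by auto
  have other: "set r \<inter> (set p \<union> set q) = {}" if "r \<in> P - {p, q}" for r
    using psysD(4)[OF ps] that pq by blast
  show "psys n P'"
    unfolding psys_def
  proof (intro conjI)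
    show "finite P'" unfolding P'_def using fin by simp
  next
    show "\<forall>r\<in>P'. r \<noteq> [] \<and> distinct r"
    proof
    fix r assume "r \<in> P'"
    then consider (a) "r = p' @ q'" | (b) "r \<in> P" unfolding P'_def by blast
    then show "r \<noteq> [] \<and> distinct r"
    proof cases
      case a
      have "set p' \<inter> set q' = {}" using disj sp by simp
      then show ?thesis using a ne dd by simp
    next
      case b then show ?thesis using psysD(2,3)[OF ps] by blast
    qed
    qed
  next
    show "\<forall>r\<in>P'. \<forall>s\<in>P'. r \<noteq> s \<longrightarrow> set r \<inter> set s = {}"
    proof (intro ballI impI)
    fix r s assume rs: "r \<in> P'" "s \<in> P'" "r \<noteq> s"
    show "set r \<inter> set s = {}"
    proof (cases "r = p' @ q'")
      case True
      then have "s \<in> P - {p, q}" using rs unfolding P'_def by auto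
      then show ?thesis using other True sp by auto
    next
      case False
      then have r: "r \<in> P - {p, q}" using rs unfolding P'_def by auto
      show ?thesis
      proof (cases "s = p' @ q'")
        case True then show ?thesis using other[OF r] sp by auto
      next
        case False
        then have "s \<in> P - {p, q}" using rs unfolding P'_def by auto
        then show ?thesis using psysD(4)[OF ps] r rs(3) by blast
      qed
    qed
    qed
  next
    have "\<Union>(set ` P') = set p \<union> set q \<union> \<Union>(set ` (P - {p, q}))" unfolding P'_def using sp by auto
    also have "\<dots> = \<Union>(set ` P)" using pq by blast
    finally show "\<Union>(set ` P') = {1..n}" using un by simp
  qed
  have "Bof P' = pedges (p' @ q') \<union> Bof (P - {p, q})" unfolding P'_def Bof_def by simp
  also have "\<dots> = insert {u, v} (pedges p \<union> pedges q) \<union> Bof (P - {p, q})"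
    using pedges_append[OF ne] lp hq ep by simp
  also have "\<dots> = insert {u, v} (Bof P)" unfolding Bof_def using pq by blast
  finally show "Bof P' = insert {u, v} (Bof P)" .
  show "{u, v} \<notin> Bof P"
  proof
    assume "{u, v} \<in> Bof P"
    then obtain r where r: "r \<in> P" "{u, v} \<in> pedges r" unfolding Bof_def by blast
    then have "u \<in> set r" "v \<in> set r" using pedges_sub by blast+
    then have "r = p" "r = q" using psysD(4)[OF ps] r(1) pq uin by blast+
    then show False using pq(3) by simp
  qed
  have nin: "p' @ q' \<notin> P - {p, q}"
  proof
    assume h: "p' @ q' \<in> P - {p, q}"
    have "hd p \<in> set (p' @ q')" using sp pne by simp
    then show False using other[OF h] pne by auto
  qed
  have "card P' = Suc (card (P - {p, q}))" unfolding P'_def using nin fin by simp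
  also have "card (P - {p, q}) = card P - 2" using pq fin by (simp add: card_Diff_subset)
  finally have cP: "card P' = Suc (card P - 2)" .
  have "card {p, q} \<le> card P" using pq fin by (intro card_mono) auto
  then have "2 \<le> card P" using pq by simp
  then show "card P' + 1 = card P" using cP by simp
qed

lemma degree_insert:
  assumes "finite B" "e \<notin> B" "x \<in> e"
  shows "degree (insert e B) x = degree B x + 1"
proof -
  have "{e' \<in> insert e B. x \<in> e'} = insert e {e' \<in> B. x \<in> e'}" using assms by auto
  then show ?thesis unfolding degree_def using assms by simp
qed

lemma Kn_edgesD: "e \<in> Kn_edges n \<Longrightarrow> \<exists>u v. u \<noteq> v \<and> u \<in> {1..n} \<and> v \<in> {1..n} \<and> e = {u, v}"
  unfolding Kn_edges_def mem_Collect_eq by metis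

lemma admD: "admissible n B e \<Longrightarrow> e \<in> Kn_edges n" "admissible n B e \<Longrightarrow> e \<notin> B"
  "admissible n B e \<Longrightarrow> degree (insert e B) x \<le> 2"
  "admissible n B e \<Longrightarrow> C \<subseteq> insert e B \<Longrightarrow> is_cycle C \<Longrightarrow> card C < n \<Longrightarrow> False"
  unfolding admissible_def by blast+

lemma adm_ends:
  assumes ps: "psys n P" and adm: "admissible n (Bof P) e" and x: "x \<in> e"
  shows "\<exists>p\<in>P. x \<in> set p \<and> (x = hd p \<or> x = last p)"
proof -
  obtain u v where uv: "u \<noteq> v" "u \<in> {1..n}" "v \<in> {1..n}" "e = {u, v}"
    using Kn_edgesD[OF admD(1)[OF adm]] by blast
  have "x \<in> {1..n}" using uv x by auto
  then obtain p where p: "p \<in> P" "x \<in> set p" using psysD(5)[OF ps] by blast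
  have "degree (insert e (Bof P)) x \<le> 2" using admD(3)[OF adm] .
  moreover have "degree (insert e (Bof P)) x = degree (Bof P) x + 1"
    using degree_insert[OF Bof_finite[OF psysD(1)[OF ps]] admD(2)[OF adm] x] .
  ultimately have "degree (Bof P) x \<le> 1" by simp
  then show ?thesis using degree_Bof_ends[OF ps p] p by blast
qed

lemma len_lt_n:
  assumes ps: "psys n P" and p: "p \<in> P" and r: "r \<in> P" "r \<noteq> p"
  shows "length p < n"
proof -
  have "set p \<union> set r \<subseteq> {1..n}" using psysD(5)[OF ps] p r by blast
  then have "card (set p \<union> set r) \<le> card {1..n}" by (intro card_mono) auto
  then have "card (set p \<union> set r) \<le> n" by simp
  moreover have "card (set p \<union> set r) = length p + length r"
    using psysD(3,4)[OF ps] p r by (subst card_Un_disjoint) (auto simp: distinct_card)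
  moreover have "length r > 0" using psysD(2)[OF ps r(1)] by simp
  ultimately show ?thesis by linarith
qed

lemma two_ends:
  assumes "u = hd p \<or> u = last p" "v = hd p \<or> v = last p" "u \<noteq> v"
  shows "{u, v} = {last p, hd p}"
  using assms by auto

lemma len_ge3:
  assumes d: "distinct p" and ne: "hd p \<noteq> last p" and nin: "{last p, hd p} \<notin> pedges p" and pne: "p \<noteq> []"
  shows "3 \<le> length p"
proof -
  have l2: "2 \<le> length p"
  proof (rule ccontr)
    assume "\<not> 2 \<le> length p"
    moreover have "0 < length p" using pne by simp
    ultimately have "length p = 1" by linarith
    then obtain a where "p = [a]" by (cases p) auto
    then show False using ne by simp
  qed
  show ?thesis
  proof (rule ccontr)
    assume "\<not> 3 \<le> length p"
    then have "length p = 2" using l2 by simp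
    then obtain a b where "p = [a, b]" by (cases p; cases "tl p") auto
    then show False using nin by (auto simp: insert_commute)
  qed
qed

lemma adm_fwd:
  assumes ps: "psys n P" and c2: "2 \<le> card P" and adm: "admissible n (Bof P) e"
  shows "\<exists>p q u v. p \<in> P \<and> q \<in> P \<and> p \<noteq> q \<and> (u = hd p \<or> u = last p) \<and> (v = hd q \<or> v = last q) \<and> e = {u, v}"
proof -
  obtain u v where uv: "u \<noteq> v" "u \<in> {1..n}" "v \<in> {1..n}" "e = {u, v}"
    using Kn_edgesD[OF admD(1)[OF adm]] by blast
  obtain p where p: "p \<in> P" "u \<in> set p" "u = hd p \<or> u = last p" using adm_ends[OF ps adm] uv by blast
  obtain q where q: "q \<in> P" "v \<in> set q" "v = hd q \<or> v = last q" using adm_ends[OF ps adm] uv by blast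
  have "p \<noteq> q"
  proof
    assume pq: "p = q"
    have e: "e = {last p, hd p}" using two_ends[OF p(3)] q(3) pq uv by blast
    have ne: "hd p \<noteq> last p" using e uv by auto
    have eB: "e \<notin> Bof P" using adm unfolding admissible_def by blast
    have "e \<notin> pedges p" using eB p(1) unfolding Bof_def by blast
    then have l3: "3 \<le> length p" using len_ge3[OF psysD(3)[OF ps p(1)] ne _ psysD(2)[OF ps p(1)]] e by simp
    have ce: "cycle_edges p = insert e (pedges p)" using cycle_pedges[of p] l3 e by simp
    have cyc: "is_cycle (cycle_edges p)" unfolding is_cycle_def using l3 psysD(3)[OF ps p(1)] by blast
    have sub: "cycle_edges p \<subseteq> insert e (Bof P)" using ce p(1) unfolding Bof_def by blast
    obtain r where r: "r \<in> P" "r \<noteq> p"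
    proof -
      have "P \<noteq> {p}" using c2 by auto
      then show ?thesis using that p(1) by blast
    qed
    have "card (cycle_edges p) < n" using card_cycle_edges[OF psysD(3)[OF ps p(1)] l3] len_lt_n[OF ps p(1) r] by simp
    then show False using adm sub cyc unfolding admissible_def by blast
  qed
  then show ?thesis using p q uv by blast
qed

lemma adm_bwd:
  assumes ps: "psys n P" and pq: "p \<in> P" "q \<in> P" "p \<noteq> q"
    and u: "u = hd p \<or> u = last p" and v: "v = hd q \<or> v = last q"
  shows "admissible n (Bof P) {u, v}"
proof -
  note M = merge[OF ps pq u v]
  define P' where "P' = insert ((if last p = u then p else rev p) @ (if hd q = v then q else rev q)) (P - {p, q})"
  have ps': "psys n P'" and B': "Bof P' = insert {u, v} (Bof P)" using M unfolding P'_def by auto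
  show ?thesis unfolding admissible_def
  proof (intro conjI allI notI)
    show "{u, v} \<in> Kn_edges n" unfolding Kn_edges_def using M by blast
    show "{u, v} \<in> Bof P \<Longrightarrow> False" using M by blast
    fix x show "degree (insert {u, v} (Bof P)) x \<le> 2" using degree_Bof_le2[OF ps'] B' by simp
  next
    assume "\<exists>C\<subseteq>insert {u, v} (Bof P). is_cycle C \<and> card C < n"
    then show False using psys_acyclic[OF ps'] B' by blast
  qed
qed



lemma card_pedges_le: "card (pedges p) \<le> length p - 1"
proof -
  have "pedges p = (\<lambda>i. {p ! i, p ! Suc i}) ` {..<length p - 1}" unfolding pedges_nth by auto
  then show ?thesis by (metis card_image_le card_lessThan finite_lessThan)
qed

lemma Bof_single[simp]: "Bof {p} = pedges p" unfolding Bof_def by simp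

lemma ham_card: "ham_cycle n C \<Longrightarrow> card C = n"
  unfolding ham_cycle_def using card_cycle_edges by (auto simp: distinct_card[symmetric])

lemma single_facts:
  assumes ps: "psys n {p}" and n3: "3 \<le> n"
  shows "length p = n" "hd p \<noteq> last p" "{last p, hd p} \<notin> pedges p"
    "cycle_edges p = insert {last p, hd p} (pedges p)" "distinct p" "set p = {1..n}"
proof -
  show sp: "set p = {1..n}" using psysD(5)[OF ps] by simp
  show dp: "distinct p" using psysD(3)[OF ps] by simp
  show lp: "length p = n" using sp dp by (metis card_atLeastAtMost diff_Suc_1 distinct_card)
  have pne: "p \<noteq> []" using lp n3 by auto
  have "hd p = p ! 0" "last p = p ! (n - 1)" using pne lp by (simp_all add: hd_conv_nth last_conv_nth)
  then show ne: "hd p \<noteq> last p" using dp lp n3 by (simp add: nth_eq_iff_index_eq)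
  show ce: "cycle_edges p = insert {last p, hd p} (pedges p)" using cycle_pedges lp n3 by simp
  show "{last p, hd p} \<notin> pedges p"
  proof
    assume "{last p, hd p} \<in> pedges p"
    then have "cycle_edges p = pedges p" using ce by auto
    then have "card (cycle_edges p) \<le> n - 1" using card_pedges_le[of p] lp by simp
    then show False using card_cycle_edges[OF dp] lp n3 by simp
  qed
qed

lemma adm_single:
  assumes ps: "psys n {p}" and n3: "3 \<le> n"
  shows "{e. admissible n (Bof {p}) e} = {{last p, hd p}}"
    "ham_cycle n (insert {last p, hd p} (Bof {p}))"
proof -
  note F = single_facts[OF ps n3]
  show "ham_cycle n (insert {last p, hd p} (Bof {p}))" unfolding ham_cycle_def
    using F n3 by (intro exI[of _ p]) auto
  have "admissible n (Bof {p}) {last p, hd p}" unfolding admissible_def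
  proof (intro conjI allI notI)
    have pne: "p \<noteq> []" using F(1) n3 by auto
    show "{last p, hd p} \<in> Kn_edges n" unfolding Kn_edges_def
      using F(2,6) pne by (intro CollectI exI[of _ "last p"] exI[of _ "hd p"]) auto
    show "{last p, hd p} \<in> Bof {p} \<Longrightarrow> False" using F by simp
    fix x show "degree (insert {last p, hd p} (Bof {p})) x \<le> 2"
      using degree_cycle_le2[of p x] F n3 by simp
  next
    assume "\<exists>C\<subseteq>insert {last p, hd p} (Bof {p}). is_cycle C \<and> card C < n"
    then obtain C where "C \<subseteq> cycle_edges p" "is_cycle C" "card C < n" using F by auto
    then show False using cycle_in_ham(1)[of C p] F n3 by simp
  qed
  moreover have "e = {last p, hd p}" if adm: "admissible n (Bof {p}) e" for e
  proof -
    obtain u v where uv: "u \<noteq> v" "u \<in> {1..n}" "v \<in> {1..n}" "e = {u, v}"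
      using Kn_edgesD[OF admD(1)[OF adm]] by blast
    have "u = hd p \<or> u = last p" "v = hd p \<or> v = last p" using adm_ends[OF ps adm] uv by auto
    then show ?thesis using two_ends uv by blast
  qed
  ultimately show "{e. admissible n (Bof {p}) e} = {{last p, hd p}}" by blast
qed

lemma Bof_edge_two: "psys n P \<Longrightarrow> f \<in> Bof P \<Longrightarrow> card f \<le> 2"
  unfolding Bof_def using pedges_two psysD(3) by (fastforce simp: card_insert_if)

lemma card_split: "finite A \<Longrightarrow> card (A - X) + card (A \<inter> X) = card A"
proof -
  assume f: "finite A"
  have "A = (A - X) \<union> (A \<inter> X)" by blast
  then have "card A = card ((A - X) \<union> (A \<inter> X))" by simp
  also have "\<dots> = card (A - X) + card (A \<inter> X)" using f by (intro card_Un_disjoint) auto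
  finally show ?thesis by simp
qed

lemma Bof_edge_finite: "psys n P \<Longrightarrow> f \<in> Bof P \<Longrightarrow> finite f"
  unfolding Bof_def using pedges_two psysD(3) by fastforce

lemma H_count:
  assumes ps: "psys n P" and c2: "2 \<le> card P"
    and h: "distinct h" "set h = {1..n}" "3 \<le> length h"
    and cB: "card (Bof P) + card P = n"
  defines "H \<equiv> cycle_edges h"
  defines "B \<equiv> Bof P"
  shows "card P \<le> card {e \<in> H. admissible n B e} + 4 * card (B - H)"
proof -
  have fB: "finite B" unfolding B_def using Bof_finite psysD(1)[OF ps] by blast
  have fH: "finite H" unfolding H_def by simp
  have lh: "length h = n" using h by (metis card_atLeastAtMost diff_Suc_1 distinct_card)
  have cH: "card H = n" unfolding H_def using card_cycle_edges[OF h(1,3)] lh by simp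
  have a1: "card (H - B) + card (H \<inter> B) = card H" using fH by (rule card_split)
  have a2: "card (B - H) + card (B \<inter> H) = card B" using fB by (rule card_split)
  have "H \<inter> B = B \<inter> H" by blast
  then have i1: "card (H \<inter> B) = card (B \<inter> H)" by simp
  have cB': "card B + card P = n" using cB unfolding B_def .
  have cHB: "card (H - B) = card P + card (B - H)" using a1 a2 cB' cH i1 by linarith
  define W where "W = \<Union>(B - H)"
  define Bad1 where "Bad1 = (\<Union>w\<in>W. {e \<in> H. w \<in> e})"
  define Q where "Q = {p \<in> P. pedges p \<inter> (B - H) \<noteq> {}}"
  define Bad2 where "Bad2 = (\<lambda>p. {last p, hd p}) ` Q"
  have fW: "finite W" unfolding W_def using fB Bof_edge_finite[OF ps] unfolding B_def
    by (intro finite_Union) auto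
  have cW: "card W \<le> 2 * card (B - H)"
  proof -
    have "card W \<le> sum card (B - H)" unfolding W_def by (rule card_Union_le_sum_card)
    also have "\<dots> \<le> sum (\<lambda>_. 2) (B - H)" using Bof_edge_two[OF ps] unfolding B_def by (intro sum_mono) auto
    finally show ?thesis by simp
  qed
  have dH: "card {e \<in> H. w \<in> e} \<le> 2" for w using degree_cycle_le2[OF h(1,3)] unfolding degree_def H_def by simp
  have cB1: "card Bad1 \<le> 4 * card (B - H)"
  proof -
    have "card Bad1 \<le> (\<Sum>w\<in>W. card {e \<in> H. w \<in> e})" unfolding Bad1_def using fW by (rule card_UN_le)
    also have "\<dots> \<le> (\<Sum>w\<in>W. 2)" using dH by (intro sum_mono) auto
    finally show ?thesis using cW by simp
  qed
  have cQ: "card Q \<le> card (B - H)"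
  proof -
    define g where "g p = (SOME f. f \<in> pedges p \<inter> (B - H))" for p
    have g: "g p \<in> pedges p \<inter> (B - H)" if "p \<in> Q" for p
    proof -
      from that obtain f where "f \<in> pedges p \<inter> (B - H)" unfolding Q_def by blast
      then show ?thesis unfolding g_def by (rule someI)
    qed
    have "inj_on g Q"
    proof (rule inj_onI)
      fix p q assume pq: "p \<in> Q" "q \<in> Q" "g p = g q"
      have "p \<in> P" "q \<in> P" using pq unfolding Q_def by auto
      moreover obtain a b where ab: "g p = {a, b}" using pedges_two g pq(1) psysD(3)[OF ps] \<open>p \<in> P\<close> by blast
      moreover have "g p \<subseteq> set p" "g q \<subseteq> set q" using g pq pedges_sub by blast+
      ultimately have "a \<in> set p" "a \<in> set q" using pq(3) by auto
      then show "p = q" using psysD(4)[OF ps] \<open>p \<in> P\<close> \<open>q \<in> P\<close> by blast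
    qed
    moreover have "g ` Q \<subseteq> B - H" using g by blast
    ultimately show ?thesis using card_inj_on_le fB by blast
  qed
  have fQ: "finite Q" unfolding Q_def using psysD(1)[OF ps] by simp
  have cB2: "card Bad2 \<le> card (B - H)" unfolding Bad2_def using card_image_le[OF fQ] cQ le_trans by blast
  have cover: "H - B \<subseteq> {e \<in> H. admissible n B e} \<union> Bad1 \<union> Bad2"
  proof
    fix e assume e: "e \<in> H - B"
    show "e \<in> {e \<in> H. admissible n B e} \<union> Bad1 \<union> Bad2"
    proof (cases "admissible n B e")
      case True then show ?thesis using e by blast
    next
      case nadm: False
      obtain i where i: "i < length h" "e = {h ! i, h ! (Suc i mod length h)}"
        using e unfolding H_def cycle_edges_def by auto
      define u where "u = h ! i"
      define v where "v = h ! (Suc i mod length h)"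
      have uvh: "u \<in> set h" "v \<in> set h" using i unfolding u_def v_def
        by (auto intro!: nth_mem mod_less_divisor)
      have sl: "Suc i mod length h < length h" using mod_prev_next(3)[OF h(3) i(1)] .
      have uv: "u \<noteq> v" using mod_prev_next(6)[OF h(3) i(1)] h(1) i(1) sl unfolding u_def v_def
        by (simp add: nth_eq_iff_index_eq)
      have euv: "e = {u, v}" using i u_def v_def by simp
      have bad_end: "e \<in> Bad1" if x: "x \<in> e" "x \<in> set p" "p \<in> P" "\<not> (x = hd p \<or> x = last p)" for x p
      proof -
        have "\<not> degree B x \<le> 1" using degree_Bof_ends[OF ps x(3,2)] x(4) unfolding B_def by blast
        then have d2: "2 \<le> card {f \<in> B. x \<in> f}" unfolding degree_def by simp
        have "\<exists>f\<in>B - H. x \<in> f"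
        proof (rule ccontr)
          assume "\<not> (\<exists>f\<in>B - H. x \<in> f)"
          then have "insert e {f \<in> B. x \<in> f} \<subseteq> {f \<in> H. x \<in> f}" using e x(1) by blast
          then have "card (insert e {f \<in> B. x \<in> f}) \<le> card {f \<in> H. x \<in> f}" using fH by (intro card_mono) auto
          then have "card (insert e {f \<in> B. x \<in> f}) \<le> 2" using dH[of x] by linarith
          moreover have "card (insert e {f \<in> B. x \<in> f}) = Suc (card {f \<in> B. x \<in> f})"
            using e fB by simp
          ultimately show False using d2 by simp
        qed
        then have "x \<in> W" unfolding W_def by blast
        then show ?thesis unfolding Bad1_def using e x(1) by blast
      qed
      obtain p where p: "p \<in> P" "u \<in> set p" using uvh h(2) psysD(5)[OF ps] by blast
      obtain q where q: "q \<in> P" "v \<in> set q" using uvh h(2) psysD(5)[OF ps] by blast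
      show ?thesis
      proof (cases "(u = hd p \<or> u = last p) \<and> (v = hd q \<or> v = last q)")
        case False
        then consider "\<not> (u = hd p \<or> u = last p)" | "\<not> (v = hd q \<or> v = last q)" by blast
        then have "e \<in> Bad1"
        proof cases
          case 1 show ?thesis by (rule bad_end[of u p]) (use euv p 1 in auto)
        next
          case 2 show ?thesis by (rule bad_end[of v q]) (use euv q 2 in auto)
        qed
        then show ?thesis by blast
      next
        case True
        have "p = q"
        proof (rule ccontr)
          assume pq: "p \<noteq> q"
          have "admissible n (Bof P) {u, v}" using True by (intro adm_bwd[OF ps p(1) q(1) pq]) auto
          then show False using nadm euv unfolding B_def by simp
        qed
        have uvl: "{u, v} = {last p, hd p}" using True \<open>p = q\<close> uv by (intro two_ends) auto
        then have ee: "e = {last p, hd p}" using euv by simp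
        have "p \<in> Q"
        proof (rule ccontr)
          assume pQ: "p \<notin> Q"
          have sub: "pedges p \<subseteq> H"
          proof
            fix f assume f: "f \<in> pedges p"
            then have "f \<in> B" using p(1) unfolding B_def Bof_def by blast
            then show "f \<in> H" using pQ p(1) f unfolding Q_def by blast
          qed
          have ne: "hd p \<noteq> last p"
          proof
            assume "hd p = last p"
            then have "{u, v} = {hd p}" using uvl by simp
            then show False using uv by blast
          qed
          have "e \<notin> pedges p" using e p(1) unfolding B_def Bof_def by blast
          then have l3: "3 \<le> length p" using len_ge3[OF psysD(3)[OF ps p(1)] ne _ psysD(2)[OF ps p(1)]] ee by simp
          have ce: "cycle_edges p = insert e (pedges p)" using cycle_pedges[of p] l3 ee by simp
          have cyc: "is_cycle (cycle_edges p)" unfolding is_cycle_def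
            by (rule exI[of _ p]) (use l3 psysD(3)[OF ps p(1)] in simp)
          have cH: "cycle_edges p \<subseteq> cycle_edges h" unfolding ce using sub e unfolding H_def by blast
          have "length h \<le> card (cycle_edges p)" by (rule cycle_in_ham(1)[OF cyc cH h(1,3)])
          then have "n \<le> card (cycle_edges p)" using lh by simp
          moreover have "P \<noteq> {p}" using c2 by auto
          then obtain r where r: "r \<in> P" "r \<noteq> p" using p(1) by blast
          ultimately show False using card_cycle_edges[OF psysD(3)[OF ps p(1)] l3] len_lt_n[OF ps p(1) r] by simp
        qed
        then show ?thesis unfolding Bad2_def using ee by blast
      qed
    qed
  qed
  have "card (H - B) \<le> card ({e \<in> H. admissible n B e} \<union> Bad1 \<union> Bad2)"
  proof (rule card_mono)
    have "Bad1 \<subseteq> H" unfolding Bad1_def by blast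
    then show "finite ({e \<in> H. admissible n B e} \<union> Bad1 \<union> Bad2)"
      using fH fQ finite_subset unfolding Bad2_def by auto
  qed (rule cover)
  also have "\<dots> \<le> card ({e \<in> H. admissible n B e} \<union> Bad1) + card Bad2" by (rule card_Un_le)
  also have "\<dots> \<le> card {e \<in> H. admissible n B e} + card Bad1 + card Bad2" using card_Un_le by simp
  finally show ?thesis using cHB cB1 cB2 by simp
qed



lemma weighted_choice_props:
  assumes fin: "finite A" and ne: "A \<noteq> {}" and pos: "\<And>x. x \<in> A \<Longrightarrow> 0 < w x"
  shows "pmf (weighted_choice A w) x = (if x \<in> A then w x / (\<Sum>y\<in>A. w y) else 0)"
    "set_pmf (weighted_choice A w) = A"
proof -
  define f where "f x = (if x \<in> A then w x / (\<Sum>y\<in>A. w y) else 0)" for x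
  have S: "0 < (\<Sum>y\<in>A. w y)" using fin ne pos by (intro sum_pos) auto
  have nn: "0 \<le> f x" for x unfolding f_def using S pos by (auto intro: less_imp_le)
  have "(\<integral>\<^sup>+x. ennreal (f x) \<partial>count_space UNIV) = (\<integral>\<^sup>+x. ennreal (f x) * indicator A x \<partial>count_space UNIV)"
    by (intro nn_integral_cong) (auto simp: f_def split: split_indicator)
  also have "\<dots> = (\<integral>\<^sup>+x. ennreal (f x) \<partial>count_space A)"
    by (simp add: nn_integral_count_space_indicator)
  also have "\<dots> = (\<Sum>a\<in>A. ennreal (f a))" using fin by (rule nn_integral_count_space_finite)
  also have "\<dots> = ennreal (\<Sum>a\<in>A. f a)" using nn by (simp add: sum_ennreal)
  also have "(\<Sum>a\<in>A. f a) = (\<Sum>a\<in>A. w a / (\<Sum>y\<in>A. w y))" unfolding f_def by simp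
  also have "\<dots> = 1" using S by (simp add: sum_divide_distrib[symmetric])
  finally have int1: "(\<integral>\<^sup>+x. ennreal (f x) \<partial>count_space UNIV) = 1" by simp
  have wc: "weighted_choice A w = embed_pmf f" unfolding weighted_choice_def f_def by simp
  show "pmf (weighted_choice A w) x = (if x \<in> A then w x / (\<Sum>y\<in>A. w y) else 0)"
    unfolding wc using pmf_embed_pmf[of f, OF nn int1] f_def by simp
  show "set_pmf (weighted_choice A w) = A"
    unfolding wc using set_embed_pmf[of f, OF nn int1] S pos unfolding f_def
    by (auto simp: less_imp_neq[symmetric])
qed

lemma prob_bind_finite:
  assumes fin: "finite (set_pmf M)"
  shows "measure_pmf.prob (bind_pmf M N) X = (\<Sum>x\<in>set_pmf M. pmf M x * measure_pmf.prob (N x) X)"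
proof -
  have "ennreal (measure_pmf.prob (bind_pmf M N) X) = emeasure (measure_pmf (bind_pmf M N)) X"
    by (simp add: measure_pmf.emeasure_eq_measure)
  also have "\<dots> = (\<integral>\<^sup>+x. emeasure (N x) X \<partial>M)" by simp
  also have "\<dots> = (\<Sum>x\<in>set_pmf M. emeasure (N x) X * pmf M x)"
    using fin by (intro nn_integral_measure_pmf_finite) auto
  also have "\<dots> = (\<Sum>x\<in>set_pmf M. ennreal (pmf M x * measure_pmf.prob (N x) X))"
    by (intro sum.cong) (auto simp: measure_pmf.emeasure_eq_measure ennreal_mult mult.commute)
  also have "\<dots> = ennreal (\<Sum>x\<in>set_pmf M. pmf M x * measure_pmf.prob (N x) X)"
    by (intro sum_ennreal) auto
  finally show ?thesis by (subst (asm) ennreal_inj) (auto intro!: sum_nonneg)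
qed

lemma edge_weight_piH:
  assumes e: "e \<in> Kn_edges n"
  shows "edge_weight (pi_H n H) e = (if e \<in> H then 2 * (1 - 1 / real n) else 2 / (real n * (real n - 2)))"
proof -
  obtain u v where uv: "u \<noteq> v" "e = {u, v}" using Kn_edgesD[OF e] by blast
  have mm: "Min e \<noteq> Max e" "{Min e, Max e} = e" "{Max e, Min e} = e"
    using uv by (auto simp: min_def max_def)
  show ?thesis unfolding edge_weight_def pi_H_def using mm by auto
qed



lemma Kn_finite: "finite (Kn_edges n)" and Kn_card: "card (Kn_edges n) \<le> n * n"
proof -
  have sub: "Kn_edges n \<subseteq> (\<lambda>(i, j). {i, j}) ` ({1..n} \<times> {1..n})" unfolding Kn_edges_def by auto
  then show "finite (Kn_edges n)" by (rule finite_subset) simp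
  have "card (Kn_edges n) \<le> card ((\<lambda>(i, j). {i, j}) ` ({1..n} \<times> {1..n}))" using sub by (intro card_mono) auto
  also have "\<dots> \<le> card ({1..n} \<times> {1..n})" by (rule card_image_le) simp
  finally show "card (Kn_edges n) \<le> n * n" by (simp add: card_cartesian_product)
qed

lemma adm_finite: "finite {e. admissible n B e}"
  by (rule finite_subset[OF _ Kn_finite]) (auto simp: admissible_def)

lemma adm_nonempty:
  assumes ps: "psys n P" and n3: "3 \<le> n" and c1: "1 \<le> card P"
  shows "{e. admissible n (Bof P) e} \<noteq> {}"
proof (cases "card P = 1")
  case True
  then obtain p where "P = {p}" by (auto simp: card_Suc_eq)
  then show ?thesis using adm_single(1)[of n p] ps n3 by auto
next
  case False
  then have "2 \<le> card P" using c1 by simp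
  then have "\<not> (\<forall>x\<in>P. \<forall>y\<in>P. x = y)" using card_le_Suc0_iff_eq[OF psysD(1)[OF ps]] by auto
  then obtain p q where pq: "p \<in> P" "q \<in> P" "p \<noteq> q" by blast
  have "admissible n (Bof P) {hd p, hd q}" using adm_bwd[OF ps pq] by simp
  then show ?thesis by blast
qed

lemma weights_pos:
  assumes "3 \<le> n" "e \<in> Kn_edges n"
  shows "0 < edge_weight (pi_H n H) e"
proof -
  have "(1::real) / real n < 1" using assms by simp
  moreover have "0 < real n * (real n - 2)" using assms by simp
  ultimately show ?thesis using edge_weight_piH[OF assms(2)] by auto
qed

lemma not_ham_Bof:
  assumes "card (Bof P) + card P = n" "1 \<le> card P"
  shows "\<not> ham_cycle n (Bof P)"
  using ham_card[of n "Bof P"] assms by auto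

definition "WC n H B = weighted_choice {e. admissible n B e} (edge_weight (pi_H n H))"

lemma WC_props:
  assumes ps: "psys n P" and n3: "3 \<le> n" and c1: "1 \<le> card P"
  shows "set_pmf (WC n H (Bof P)) = {e. admissible n (Bof P) e}"
    "pmf (WC n H (Bof P)) e = (if admissible n (Bof P) e then edge_weight (pi_H n H) e /
        (\<Sum>y\<in>{e. admissible n (Bof P) e}. edge_weight (pi_H n H) y) else 0)"
proof -
  have pos: "\<And>x. x \<in> {e. admissible n (Bof P) e} \<Longrightarrow> 0 < edge_weight (pi_H n H) x"
    using weights_pos[OF n3] admD(1) by blast
  note W = weighted_choice_props[OF adm_finite adm_nonempty[OF ps n3 c1] pos]
  show "set_pmf (WC n H (Bof P)) = {e. admissible n (Bof P) e}" unfolding WC_def using W(2) .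
  show "pmf (WC n H (Bof P)) e = (if admissible n (Bof P) e then edge_weight (pi_H n H) e /
        (\<Sum>y\<in>{e. admissible n (Bof P) e}. edge_weight (pi_H n H) y) else 0)"
    unfolding WC_def using W(1) by simp
qed

lemma gen_unfold:
  assumes "card (Bof P) + card P = n" "card P = Suc r"
  shows "gen_steps (pi_H n H) n (Suc r) (Bof P) = bind_pmf (WC n H (Bof P)) (\<lambda>e. gen_steps (pi_H n H) n r (insert e (Bof P)))"
  using not_ham_Bof[of P n] assms unfolding WC_def by simp

lemma next_state:
  assumes ps: "psys n P" and c2: "2 \<le> card P" and cB: "card (Bof P) + card P = n"
    and adm: "admissible n (Bof P) e"
  shows "\<exists>P'. psys n P' \<and> Bof P' = insert e (Bof P) \<and> card P' + 1 = card P \<and>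
     card (Bof P') + card P' = n \<and> e \<notin> Bof P"
proof -
  obtain p q u v where pq: "p \<in> P" "q \<in> P" "p \<noteq> q" "u = hd p \<or> u = last p" "v = hd q \<or> v = last q" "e = {u, v}"
    using adm_fwd[OF ps c2 adm] by blast
  note M = merge[OF ps pq(1-5)]
  define P' where "P' = insert ((if last p = u then p else rev p) @ (if hd q = v then q else rev q)) (P - {p, q})"
  have fB: "finite (Bof P)" using Bof_finite psysD(1)[OF ps] by blast
  have "psys n P'" "Bof P' = insert e (Bof P)" "card P' + 1 = card P" "e \<notin> Bof P"
    using M pq(6) unfolding P'_def by auto
  moreover have "card (Bof P') + card P' = n" using calculation cB fB by simp
  ultimately show ?thesis by blast
qed

lemma support:
  assumes n3: "3 \<le> n"
  shows "psys n P \<Longrightarrow> card P = r \<Longrightarrow> 1 \<le> r \<Longrightarrow> card (Bof P) + r = n \<Longrightarrow>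
    B' \<in> set_pmf (gen_steps (pi_H n H) n r (Bof P)) \<Longrightarrow>
    ham_cycle n B' \<and> card (B' - H) \<le> card (Bof P - H) + r"
proof (induction r arbitrary: P B')
  case 0 then show ?case by simp
next
  case (Suc r)
  have fB: "finite (Bof P)" using Bof_finite psysD(1)[OF Suc.prems(1)] by blast
  from Suc.prems(5) obtain e where e: "admissible n (Bof P) e"
    and B': "B' \<in> set_pmf (gen_steps (pi_H n H) n r (insert e (Bof P)))"
    unfolding gen_unfold[OF Suc.prems(4)[folded Suc.prems(2)] Suc.prems(2)]
    using WC_props(1)[OF Suc.prems(1) n3] Suc.prems(2) by auto
  have ci: "card (insert e (Bof P) - H) \<le> card (Bof P - H) + 1"
  proof -
    have "insert e (Bof P) - H \<subseteq> insert e (Bof P - H)" by blast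
    then have "card (insert e (Bof P) - H) \<le> card (insert e (Bof P - H))" using fB by (intro card_mono) auto
    also have "\<dots> \<le> card (Bof P - H) + 1" using fB by (simp add: card_insert_if)
    finally show ?thesis .
  qed
  show ?case
  proof (cases "r = 0")
    case True
    then obtain p where P: "P = {p}" using Suc.prems(2) by (auto simp: card_Suc_eq)
    have "e = {last p, hd p}" using adm_single(1)[of n p] Suc.prems(1) n3 e P by auto
    moreover have "B' = insert e (Bof P)" using B' True by simp
    ultimately show ?thesis using adm_single(2)[of n p] Suc.prems(1) n3 P ci True by auto
  next
    case False
    obtain P' where P': "psys n P'" "Bof P' = insert e (Bof P)" "card P' + 1 = card P"
      "card (Bof P') + card P' = n"
      using next_state[OF Suc.prems(1) _ _ e] Suc.prems(2,4) False by auto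
    have "ham_cycle n B' \<and> card (B' - H) \<le> card (Bof P' - H) + r"
      using Suc.IH[OF P'(1) _ _ _] P' Suc.prems(2) False B' by auto
    then show ?thesis using ci P'(2) by simp
  qed
qed



lemma sum_split_H:
  assumes "finite A"
  shows "(\<Sum>e\<in>A. f e) = (\<Sum>e\<in>A \<inter> H. f e) + (\<Sum>e\<in>A - H. f e)"
proof -
  have "A = (A \<inter> H) \<union> (A - H)" by blast
  then have "(\<Sum>e\<in>A. f e) = (\<Sum>e\<in>(A \<inter> H) \<union> (A - H). f e)" by simp
  also have "\<dots> = (\<Sum>e\<in>A \<inter> H. f e) + (\<Sum>e\<in>A - H. f e)" using assms by (intro sum.union_disjoint) auto
  finally show ?thesis .
qed

lemma pn_bound:
  assumes ps: "psys n P" and c2: "2 \<le> card P" and cB: "card (Bof P) + card P = n" and n5: "5 \<le> n"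
    and h: "distinct h" "set h = {1..n}" "3 \<le> length h"
    and j8: "8 * card (Bof P - cycle_edges h) < card P"
  defines "H \<equiv> cycle_edges h"
  defines "A \<equiv> {e. admissible n (Bof P) e}"
  shows "(\<Sum>e\<in>A - H. pmf (WC n H (Bof P)) e) \<le> 8 / real (card P)"
proof -
  let ?w = "edge_weight (pi_H n H)"
  define S where "S = (\<Sum>y\<in>A. ?w y)"
  define ch where "ch = 2 * (1 - 1 / real n)"
  define cn where "cn = 2 / (real n * (real n - 2))"
  have n3: "3 \<le> n" using n5 by simp
  have fA: "finite A" unfolding A_def by (rule adm_finite)
  have AK: "A \<subseteq> Kn_edges n" unfolding A_def using admD(1) by blast
  have wH: "?w e = ch" if "e \<in> A \<inter> H" for e using edge_weight_piH[of e n H] that AK unfolding ch_def by auto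
  have wN: "?w e = cn" if "e \<in> A - H" for e using edge_weight_piH[of e n H] that AK unfolding cn_def by auto
  have Wh: "(\<Sum>e\<in>A \<inter> H. ?w e) = real (card (A \<inter> H)) * ch" using wH by simp
  have Wn: "(\<Sum>e\<in>A - H. ?w e) = real (card (A - H)) * cn" using wN by simp
  have S_eq: "S = real (card (A \<inter> H)) * ch + real (card (A - H)) * cn"
    unfolding S_def using sum_split_H[OF fA, of ?w H] Wh Wn by simp
  have ch1: "1 \<le> ch" unfolding ch_def using n5 by (simp add: field_simps)
  have cn0: "0 < cn" unfolding cn_def using n5 by simp
  have cAK: "card (A - H) \<le> n * n" using Kn_card[of n] card_mono[OF Kn_finite, of "A - H"] AK by force
  have Wn4: "real (card (A - H)) * cn \<le> 4"
  proof -
    have cAK': "real (card (A - H)) \<le> real (n * n)" using cAK by (simp only: of_nat_le_iff)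
    have "real (card (A - H)) * cn \<le> real (n * n) * cn" using cAK' cn0 by (intro mult_right_mono) auto
    also have "\<dots> = 2 * real n / (real n - 2)" unfolding cn_def using n5 by (simp add: field_simps)
    also have "\<dots> \<le> 4" using n5 by (simp add: field_simps)
    finally show ?thesis .
  qed
  have hc: "card P \<le> card {e \<in> H. admissible n (Bof P) e} + 4 * card (Bof P - H)"
    using H_count[OF ps c2 h cB] unfolding H_def .
  have AH: "A \<inter> H = {e \<in> H. admissible n (Bof P) e}" unfolding A_def by auto
  have cAH: "real (card P) / 2 \<le> real (card (A \<inter> H))" using hc j8 AH unfolding H_def by simp
  have r0: "0 < real (card P)" using c2 by simp
  have Whpos: "real (card P) / 2 \<le> real (card (A \<inter> H)) * ch"
    using cAH ch1 by (meson dual_order.trans mult_le_cancel_left1 of_nat_0_le_iff order.refl mult_left_mono)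
  have Spos: "0 < S" using S_eq Whpos r0 cn0 by (smt (verit) divide_pos_pos mult_nonneg_nonneg of_nat_0_le_iff)
  have "(\<Sum>e\<in>A - H. pmf (WC n H (Bof P)) e) = (\<Sum>e\<in>A - H. ?w e / S)"
    using WC_props(2)[OF ps n3, of H] c2 unfolding A_def S_def by (intro sum.cong) auto
  also have "\<dots> = real (card (A - H)) * cn / S" using Wn by (simp add: sum_divide_distrib[symmetric])
  also have "\<dots> \<le> 4 / (real (card P) / 2)"
  proof (rule frac_le)
    show "0 \<le> (4::real)" by simp
    show "real (card (A - H)) * cn \<le> 4" by (rule Wn4)
    show "0 < real (card P) / 2" using r0 by simp
    show "real (card P) / 2 \<le> S" using S_eq Whpos cn0 by (smt (verit) mult_nonneg_nonneg of_nat_0_le_iff)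
  qed
  also have "\<dots> = 8 / real (card P)" by simp
  finally show ?thesis .
qed

lemma poly_step:
  fixes r :: real assumes r: "2 \<le> r"
  shows "(r - 1) ^ 16 * (1 + 16 / r) \<le> r ^ 16"
proof -
  have r1: "1 \<le> r - 1" using r by simp
  have "1 + real 16 * (1 / (r - 1)) \<le> (1 + 1 / (r - 1)) ^ 16"
    by (rule Bernoulli_inequality) (use r1 in \<open>simp add: field_simps\<close>)
  also have "1 + 1 / (r - 1) = r / (r - 1)" using r1 by (simp add: field_simps)
  finally have b: "1 + 16 / (r - 1) \<le> (r / (r - 1)) ^ 16" by simp
  have "(r - 1) ^ 16 * (1 + 16 / r) \<le> (r - 1) ^ 16 * (1 + 16 / (r - 1))"
    using r1 by (intro mult_left_mono) (auto simp: field_simps)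
  also have "\<dots> \<le> (r - 1) ^ 16 * (r / (r - 1)) ^ 16" using b r1 by (intro mult_left_mono) auto
  also have "\<dots> = r ^ 16" using r1 by (simp add: power_divide)
  finally show ?thesis .
qed



definition "Bad n H m = {B. \<not> ham_cycle n B \<or> m \<le> card (B - H)}"
definition "gb (m::nat) (r::nat) (j::nat) = exp (real j + (1 - real m) / 9) * real r ^ 16"

lemma gb_nonneg: "0 \<le> gb m r j" unfolding gb_def by simp

lemma gb_suc: "gb m r (Suc j) = exp 1 * gb m r j"
  unfolding gb_def by (simp add: exp_add[symmetric] algebra_simps)

lemma card_insert_minus:
  assumes "finite B" "e \<notin> B"
  shows "card (insert e B - H) = card (B - H) + (if e \<in> H then 0 else 1)"
proof (cases "e \<in> H")
  case True
  then have "insert e B - H = B - H" by blast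
  then show ?thesis using True by simp
next
  case False
  then have "insert e B - H = insert e (B - H)" by blast
  then show ?thesis using False assms by simp
qed

lemma main_bound:
  assumes n5: "5 \<le> n" and h: "distinct h" "set h = {1..n}" "3 \<le> length h" and H: "H = cycle_edges h"
  shows "psys n P \<Longrightarrow> card P = r \<Longrightarrow> 1 \<le> r \<Longrightarrow> card (Bof P) + r = n \<Longrightarrow>
    measure_pmf.prob (gen_steps (pi_H n H) n r (Bof P)) (Bad n H m) \<le> gb m r (card (Bof P - H))"
proof (induction r arbitrary: P)
  case 0 then show ?case by simp
next
  case (Suc r)
  have n3: "3 \<le> n" using n5 by simp
  note ps = Suc.prems(1)
  define B where "B = Bof P"
  define j where "j = card (B - H)"
  have fB: "finite B" unfolding B_def using Bof_finite psysD(1)[OF ps] by blast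
  have cB: "card (Bof P) + card P = n" using Suc.prems(2,4) by simp
  let ?G = "gen_steps (pi_H n H) n (Suc r) (Bof P)"
  consider (small) "j + Suc r < m" | (det) "m \<le> j + Suc r" "Suc r \<le> 8 * j \<or> r = 0" | (rec) "8 * j < Suc r" "r \<noteq> 0"
    by linarith
  then show ?case
  proof cases
    case small
    have "set_pmf ?G \<inter> Bad n H m = {}"
    proof (rule ccontr)
      assume "set_pmf ?G \<inter> Bad n H m \<noteq> {}"
      then obtain B' where B': "B' \<in> set_pmf ?G" "B' \<in> Bad n H m" by blast
      have "ham_cycle n B' \<and> card (B' - H) \<le> card (Bof P - H) + Suc r"
        using support[OF n3 Suc.prems(1-4) B'(1)] .
      then show False using B'(2) small unfolding Bad_def j_def B_def by auto
    qed
    then have "measure_pmf.prob ?G (Bad n H m) = 0" by (simp add: measure_pmf_zero_iff)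
    then show ?thesis using gb_nonneg by simp
  next
    case det
    have "m \<le> 9 * j + 1" using det by auto
    then have "real m \<le> real (9 * j + 1)" by (rule of_nat_mono)
    then have "real m \<le> 9 * real j + 1" by simp
    then have e0: "0 \<le> real j + (1 - real m) / 9" by (simp add: field_simps)
    have "1 \<le> exp (real j + (1 - real m) / 9)" using e0 by simp
    moreover have "1 \<le> real (Suc r) ^ 16" by simp
    ultimately have "1 * 1 \<le> exp (real j + (1 - real m) / 9) * real (Suc r) ^ 16"
      by (intro mult_mono) auto
    then have "1 \<le> gb m (Suc r) j" unfolding gb_def by simp
    then show ?thesis using measure_pmf.prob_le_1 unfolding j_def B_def by (meson order_trans)
  next
    case rec
    let ?W = "WC n H (Bof P)"
    define A where "A = {e. admissible n (Bof P) e}"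
    have c1: "1 \<le> card P" using Suc.prems(2) by simp
    have c2: "2 \<le> card P" using Suc.prems(2) rec by simp
    have sW: "set_pmf ?W = A" unfolding A_def using WC_props(1)[OF ps n3 c1] .
    have fA: "finite A" unfolding A_def by (rule adm_finite)
    have eq1: "measure_pmf.prob ?G (Bad n H m) =
        (\<Sum>e\<in>A. pmf ?W e * measure_pmf.prob (gen_steps (pi_H n H) n r (insert e (Bof P))) (Bad n H m))"
      unfolding gen_unfold[OF cB Suc.prems(2)] using prob_bind_finite[of ?W] sW fA by simp
    have step: "measure_pmf.prob (gen_steps (pi_H n H) n r (insert e (Bof P))) (Bad n H m)
        \<le> gb m r j * (if e \<in> H then 1 else exp 1)" if e: "e \<in> A" for e
    proof -
      obtain P' where P': "psys n P'" "Bof P' = insert e (Bof P)" "card P' + 1 = card P"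
        "card (Bof P') + card P' = n" "e \<notin> Bof P"
        using next_state[OF ps c2 cB] e unfolding A_def by blast
      have cr: "card P' = r" using P'(3) Suc.prems(2) by simp
      have "measure_pmf.prob (gen_steps (pi_H n H) n r (Bof P')) (Bad n H m) \<le> gb m r (card (Bof P' - H))"
        using Suc.IH[OF P'(1) cr] rec P'(4) cr by simp
      moreover have "card (Bof P' - H) = j + (if e \<in> H then 0 else 1)"
        using card_insert_minus[OF fB P'(5)[folded B_def]] P'(2) unfolding j_def B_def by simp
      ultimately show ?thesis using P'(2) gb_suc by (auto simp: mult.commute)
    qed
    have "measure_pmf.prob ?G (Bad n H m) \<le> (\<Sum>e\<in>A. pmf ?W e * (gb m r j * (if e \<in> H then 1 else exp 1)))"
      unfolding eq1 by (intro sum_mono mult_left_mono step) auto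
    also have "\<dots> = gb m r j * (\<Sum>e\<in>A. pmf ?W e * (if e \<in> H then 1 else exp 1))"
      by (simp add: sum_distrib_left algebra_simps)
    also have "(\<Sum>e\<in>A. pmf ?W e * (if e \<in> H then 1 else exp 1)) = (\<Sum>e\<in>A. pmf ?W e) + (exp 1 - 1) * (\<Sum>e\<in>A - H. pmf ?W e)"
    proof -
      have a: "(\<Sum>e\<in>A. pmf ?W e * (if e \<in> H then 1 else exp 1)) = (\<Sum>e\<in>A \<inter> H. pmf ?W e) + exp 1 * (\<Sum>e\<in>A - H. pmf ?W e)"
        using sum_split_H[OF fA, of "\<lambda>e. pmf ?W e * (if e \<in> H then 1 else exp 1)" H] by (simp add: sum_distrib_left mult.commute)
      have b: "(\<Sum>e\<in>A. pmf ?W e) = (\<Sum>e\<in>A \<inter> H. pmf ?W e) + (\<Sum>e\<in>A - H. pmf ?W e)"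
        using sum_split_H[OF fA] .
      show ?thesis using a b by (simp add: algebra_simps)
    qed
    also have "(\<Sum>e\<in>A. pmf ?W e) = 1" using sum_pmf_eq_1[OF fA] sW by simp
    finally have bound1: "measure_pmf.prob ?G (Bad n H m) \<le> gb m r j * (1 + (exp 1 - 1) * (\<Sum>e\<in>A - H. pmf ?W e))" .
    have pn: "(\<Sum>e\<in>A - H. pmf ?W e) \<le> 8 / real (card P)"
      using pn_bound[OF ps c2 cB n5 h] rec H Suc.prems(2) unfolding A_def j_def B_def by simp
    have pn0: "0 \<le> (\<Sum>e\<in>A - H. pmf ?W e)" by (simp add: sum_nonneg)
    have e3: "exp 1 - 1 \<le> (2::real)" using exp_le by simp
    have e1: "0 \<le> exp 1 - (1::real)" by simp
    have "(exp 1 - 1) * (\<Sum>e\<in>A - H. pmf ?W e) \<le> 2 * (8 / real (card P))"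
      using e3 e1 pn pn0 by (intro mult_mono) auto
    then have f1: "1 + (exp 1 - 1) * (\<Sum>e\<in>A - H. pmf ?W e) \<le> 1 + 16 / real (Suc r)"
      using Suc.prems(2) by simp
    have "gb m r j * (1 + (exp 1 - 1) * (\<Sum>e\<in>A - H. pmf ?W e)) \<le> gb m r j * (1 + 16 / real (Suc r))"
      using f1 gb_nonneg by (intro mult_left_mono) auto
    also have "\<dots> = exp (real j + (1 - real m) / 9) * ((real (Suc r) - 1) ^ 16 * (1 + 16 / real (Suc r)))"
      unfolding gb_def by simp
    also have "\<dots> \<le> exp (real j + (1 - real m) / 9) * real (Suc r) ^ 16"
      using poly_step[of "real (Suc r)"] rec by (intro mult_left_mono) auto
    also have "\<dots> = gb m (Suc r) j" unfolding gb_def ..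
    finally show ?thesis using bound1 unfolding j_def B_def by simp
  qed
qed



lemma init_state:
  fixes n :: nat
  defines "P0 \<equiv> (\<lambda>i. [i]) ` {1..n}"
  shows "psys n P0" "Bof P0 = {}" "card P0 = n"
proof -
  show "psys n P0" unfolding psys_def P0_def by auto
  show "Bof P0 = {}" unfolding Bof_def P0_def by auto
  have "inj_on (\<lambda>i. [i]) {1..n}" by (auto intro: inj_onI)
  then show "card P0 = n" unfolding P0_def by (simp add: card_image)
qed

lemma asym:
  assumes d: "0 < \<delta>" and c: "0 < c"
  shows "\<forall>\<^sub>F n in sequentially. exp ((1 - real (nat \<lceil>real n powr \<delta>\<rceil>)) / 9) * real n ^ 16
           \<le> exp (- c * real n powr (min \<delta> (1/4) / 2))"
proof -
  define K where "K = 1 + 288 / \<delta> + 9 * c"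
  have K1: "1 \<le> K" unfolding K_def using d c by simp
  define N where "N = max 1 (nat \<lceil>K powr (2 / \<delta>)\<rceil>)"
  have "\<forall>\<^sub>F n in sequentially. N \<le> n" by (rule eventually_ge_at_top)
  then show ?thesis
  proof eventually_elim
    case (elim n)
    define x where "x = real n"
    have x1: "1 \<le> x" using elim unfolding x_def N_def by simp
    have xK: "K powr (2 / \<delta>) \<le> x"
    proof -
      have "K powr (2 / \<delta>) \<le> real (nat \<lceil>K powr (2 / \<delta>)\<rceil>)" by linarith
      also have "\<dots> \<le> real N" unfolding N_def by simp
      also have "\<dots> \<le> x" using elim unfolding x_def by simp
      finally show ?thesis .
    qed
    define y where "y = x powr (\<delta> / 2)"
    have yK: "K \<le> y"
    proof -
      have "(K powr (2 / \<delta>)) powr (\<delta> / 2) \<le> x powr (\<delta> / 2)"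
        using xK d by (intro powr_mono2) auto
      moreover have "(K powr (2 / \<delta>)) powr (\<delta> / 2) = K" using d K1 by (simp add: powr_powr)
      ultimately show ?thesis unfolding y_def by simp
    qed
    have y1: "1 \<le> y" using yK K1 by simp
    have yy: "y * y = x powr \<delta>" unfolding y_def using x1 by (simp add: powr_add[symmetric])
    have lnx: "ln x = (2 / \<delta>) * ln y" unfolding y_def using x1 d by (simp add: ln_powr)
    have lny: "ln y \<le> y" using ln_le_minus_one[of y] y1 by simp
    have "(2 / \<delta>) * ln y \<le> (2 / \<delta>) * y" using lny d by (intro mult_left_mono) auto
    then have lnx2: "ln x \<le> (2 / \<delta>) * y" using lnx by simp
    define z where "z = x powr (min \<delta> (1/4) / 2)"
    have zy: "z \<le> y" unfolding z_def y_def using x1 d by (intro powr_mono) auto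
    have mge: "x powr \<delta> \<le> real (nat \<lceil>x powr \<delta>\<rceil>)" by linarith
    have Ky: "K * y \<le> y * y" using yK y1 by (intro mult_right_mono) auto
    have key: "1 - real (nat \<lceil>x powr \<delta>\<rceil>) + 144 * ln x + 9 * c * z \<le> 0"
    proof -
      have "144 * ln x \<le> 144 * ((2 / \<delta>) * y)" using lnx2 by simp
      moreover have "9 * c * z \<le> 9 * c * y" using zy c by simp
      moreover have "K * y = y + (288 / \<delta>) * y + 9 * c * y" unfolding K_def by (simp add: algebra_simps)
      ultimately show ?thesis using mge yy Ky y1 by (simp add: field_simps) linarith
    qed
    have "ln (x ^ 16) = 16 * ln x" using x1 by (simp add: ln_realpow)
    then have x16: "x ^ 16 = exp (16 * ln x)" using x1 by (metis exp_ln less_le_trans zero_less_one zero_less_power)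
    have "exp ((1 - real (nat \<lceil>x powr \<delta>\<rceil>)) / 9) * x ^ 16 = exp ((1 - real (nat \<lceil>x powr \<delta>\<rceil>)) / 9 + 16 * ln x)"
      unfolding x16 by (simp add: exp_add)
    also have "\<dots> \<le> exp (- c * z)"
    proof -
      have "(1 - real (nat \<lceil>x powr \<delta>\<rceil>)) / 9 + 16 * ln x \<le> - c * z" using key by (simp add: field_simps)
      then show ?thesis by simp
    qed
    finally show ?case unfolding x_def z_def by simp
  qed
qed



theorem claim6:
  fixes \<delta> :: real
  assumes "0 < \<delta>" and "\<delta> \<le> 1"
  shows "\<forall>c>0. \<forall>\<^sub>F n in sequentially. \<forall>H. ham_cycle n H \<longrightarrow>
           measure_pmf.prob (edge_gen n (pi_H n H))
             {B. \<exists>k. real k < real n powr \<delta> \<and> k_exchange n H B k}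
           \<ge> 1 - exp (- c * real n powr (min \<delta> (1/4) / 2))"
proof (intro allI impI)
  fix c :: real assume c: "0 < c"
  have ev: "\<forall>\<^sub>F n in sequentially. (exp ((1 - real (nat \<lceil>real n powr \<delta>\<rceil>)) / 9) * real n ^ 16
           \<le> exp (- c * real n powr (min \<delta> (1/4) / 2))) \<and> 5 \<le> n"
    using asym[OF assms(1) c] eventually_ge_at_top[of 5] by (rule eventually_conj)
  then show "\<forall>\<^sub>F n in sequentially. \<forall>H. ham_cycle n H \<longrightarrow>
           measure_pmf.prob (edge_gen n (pi_H n H))
             {B. \<exists>k. real k < real n powr \<delta> \<and> k_exchange n H B k}
           \<ge> 1 - exp (- c * real n powr (min \<delta> (1/4) / 2))"
  proof eventually_elim
    case (elim n)
    show ?case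
    proof (intro allI impI)
      fix H assume hH: "ham_cycle n H"
      obtain h where h: "3 \<le> length h" "distinct h" "set h = {1..n}" "H = cycle_edges h"
        using hH unfolding ham_cycle_def by blast
      define m where "m = nat \<lceil>real n powr \<delta>\<rceil>"
      define P0 where "P0 = (\<lambda>i. [i]) ` {1..n}"
      note I = init_state[of n, folded P0_def]
      have "measure_pmf.prob (gen_steps (pi_H n H) n n (Bof P0)) (Bad n H m) \<le> gb m n (card (Bof P0 - H))"
        using main_bound[OF _ h(2,3,1,4), of P0 n m] elim I by simp
      then have pb: "measure_pmf.prob (edge_gen n (pi_H n H)) (Bad n H m) \<le> exp (- c * real n powr (min \<delta> (1/4) / 2))"
        using elim I unfolding edge_gen_def gb_def m_def by simp
      have sub: "UNIV - Bad n H m \<subseteq> {B. \<exists>k. real k < real n powr \<delta> \<and> k_exchange n H B k}"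
      proof
        fix B assume "B \<in> UNIV - Bad n H m"
        then have hB: "ham_cycle n B" and lt: "card (B - H) < m" unfolding Bad_def by auto
        have "real (card (B - H)) + 1 \<le> real m" using lt by linarith
        then have "real (card (B - H)) < real n powr \<delta>" unfolding m_def by linarith
        moreover have "card (H - B) = card (B - H)"
        proof -
          have fH: "finite H" and fB: "finite B" using ham_card hH hB elim
            by (metis card.infinite not_numeral_le_zero)+
          have "card (H - B) + card (H \<inter> B) = card H" using card_split[OF fH] .
          moreover have "card (B - H) + card (B \<inter> H) = card B" using card_split[OF fB] .
          moreover have "H \<inter> B = B \<inter> H" by blast
          ultimately show ?thesis using ham_card[OF hH] ham_card[OF hB] by simp
        qed
        ultimately show "B \<in> {B. \<exists>k. real k < real n powr \<delta> \<and> k_exchange n H B k}"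
          unfolding k_exchange_def using hB by auto
      qed
      have "1 - exp (- c * real n powr (min \<delta> (1/4) / 2)) \<le> 1 - measure_pmf.prob (edge_gen n (pi_H n H)) (Bad n H m)"
        using pb by simp
      also have "\<dots> = measure_pmf.prob (edge_gen n (pi_H n H)) (UNIV - Bad n H m)"
        using measure_pmf.prob_compl[of "Bad n H m" "edge_gen n (pi_H n H)"] by simp
      also have "\<dots> \<le> measure_pmf.prob (edge_gen n (pi_H n H)) {B. \<exists>k. real k < real n powr \<delta> \<and> k_exchange n H B k}"
        using sub by (intro measure_pmf.finite_measure_mono) auto
      finally show "1 - exp (- c * real n powr (min \<delta> (1/4) / 2)) \<le> measure_pmf.prob (edge_gen n (pi_H n H))
             {B. \<exists>k. real k < real n powr \<delta> \<and> k_exchange n H B k}" .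
    qed
  qed
qed


end
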